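(* Let $L\geq 2$ and let $\mathcal{Z}(\lambda_1,\dots,\lambda_L)=\langle\bar 0|\mathcal{B}(\lambda_1)\cdots\mathcal{B}(\lambda_L)|0\rangle$ be the partition function of the six-vertex model with one reflecting end and domain-wall boundaries (see context). Then $\mathcal{Z}$ vanishes whenever $\lambda_1=\mu_1-\gamma$ and $\lambda_2=\mu_1$ (with $\lambda_3,\dots,\lambda_L$ arbitrary). The same holds when $\lambda_1=\mu_1-\gamma$ and $\lambda_2=-\mu_1-\gamma$.
   Context: Parameters $\gamma,h,\mu_1,\dots,\mu_L\in\mathbb{C}$. Set $a(\lambda)=\sinh(\lambda+\gamma)$, $b(\lambda)=\sinh(\lambda)$, $c(\lambda)=\sinh(\gamma)$. The $R$-matrix $\mathcal{R}(\lambda)\in\mathrm{End}(\mathbb{C}^2\otimes\mathbb{C}^2)$ is, in the basis $e_1\otimes e_1,e_1\otimes e_2,e_2\otimes e_1,e_2\otimes e_2$, the matrix with rows $(a,0,0,0)$, $(0,b,c,0)$, $(0,c,b,0)$, $(0,0,0,a)$ evaluated at $\lambda$. Let $\mathbb{V}_0\cong\mathbb{C}^2$ and $\mathbb{V}_{\mathcal{Q}}=(\mathbb{C}^2)^{\otimes L}$; $\mathcal{R}_{0j}$ acts on $\mathbb{V}_0$ and the $j$-th factor of $\mathbb{V}_{\mathcal{Q}}$. Define $\tau(\lambda)=\mathcal{R}_{0L}(\lambda-\mu_L)\cdots\mathcal{R}_{01}(\lambda-\mu_1)$, $\bar\tau(\lambda)=\mathcal{R}_{01}(\lambda+\mu_1)\cdots\mathcal{R}_{0L}(\lambda+\mu_L)$,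 $\mathcal{K}(\lambda)=\mathrm{diag}(\sinh(h+\lambda),\sinh(h-\lambda))$ on $\mathbb{V}_0$, and $\mathcal{T}(\lambda)=\tau(\lambda)\mathcal{K}(\lambda)\bar\tau(\lambda)=\begin{pmatrix}\mathcal{A}(\lambda)&\mathcal{B}(\lambda)\\ \mathcal{C}(\lambda)&\mathcal{D}(\lambda)\end{pmatrix}$ in $\mathbb{V}_0$, with entries in $\mathrm{End}(\mathbb{V}_{\mathcal{Q}})$. Let $|0\rangle=e_1^{\otimes L}$ and $\langle\bar 0|$ the transpose of $e_2^{\otimes L}$, $e_1=(1,0)^T$, $e_2=(0,1)^T$. *)

theory Defs
  imports Complex_Main
begin

text \<open>Basis of C^2: False = e1, True = e2. Basis states of (C^2)^{\<otimes>L}: bool lists of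
length L (entry k corresponds to tensor factor k+1). Operators are given by their
matrix entries.\<close>

definition states :: "nat \<Rightarrow> bool list set" where
  "states L = {s. length s = L}"

type_synonym opQ = "bool list \<Rightarrow> bool list \<Rightarrow> complex"
type_synonym op0Q = "bool \<times> bool list \<Rightarrow> bool \<times> bool list \<Rightarrow> complex"

definition opQ_mult :: "nat \<Rightarrow> opQ \<Rightarrow> opQ \<Rightarrow> opQ" where
  "opQ_mult L M N = (\<lambda>s t. \<Sum>r\<in>states L. M s r * N r t)"

definition op0Q_mult :: "nat \<Rightarrow> op0Q \<Rightarrow> op0Q \<Rightarrow> op0Q" where
  "op0Q_mult L M N = (\<lambda>p q. \<Sum>r\<in>(UNIV::bool set) \<times> states L. M p r * N r q)"

definition op_id :: "'a \<Rightarrow> 'a \<Rightarrow> complex" where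
  "op_id p q = (if p = q then 1 else 0)"

text \<open>The R-matrix entry <a,x| R(lam) |b,y> with basis order e1e1, e1e2, e2e1, e2e2.\<close>
definition Rmat :: "complex \<Rightarrow> complex \<Rightarrow> bool \<times> bool \<Rightarrow> bool \<times> bool \<Rightarrow> complex" where
  "Rmat \<gamma> lam p q =
     (if p = q then (if fst p = snd p then sinh (lam + \<gamma>) else sinh lam)
      else if fst p \<noteq> snd p \<and> q = (snd p, fst p) then sinh \<gamma>
      else 0)"

text \<open>R_{0j}(lam) acting on V_0 and the j-th factor (1 \<le> j \<le> L) of V_Q.\<close>
definition R0j :: "complex \<Rightarrow> nat \<Rightarrow> nat \<Rightarrow> complex \<Rightarrow> op0Q" where
  "R0j \<gamma> L j lam = (\<lambda>(a, s) (b, t).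
      Rmat \<gamma> lam (a, s ! (j - 1)) (b, t ! (j - 1)) *
      (if \<forall>k<L. k \<noteq> j - 1 \<longrightarrow> s ! k = t ! k then 1 else 0))"

primrec tau_upto :: "complex \<Rightarrow> (nat \<Rightarrow> complex) \<Rightarrow> nat \<Rightarrow> complex \<Rightarrow> nat \<Rightarrow> op0Q" where
  "tau_upto \<gamma> \<mu> L lam 0 = op_id"
| "tau_upto \<gamma> \<mu> L lam (Suc n) =
     op0Q_mult L (R0j \<gamma> L (Suc n) (lam - \<mu> (Suc n))) (tau_upto \<gamma> \<mu> L lam n)"

primrec taubar_upto :: "complex \<Rightarrow> (nat \<Rightarrow> complex) \<Rightarrow> nat \<Rightarrow> complex \<Rightarrow> nat \<Rightarrow> op0Q" where
  "taubar_upto \<gamma> \<mu> L lam 0 = op_id"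
| "taubar_upto \<gamma> \<mu> L lam (Suc n) =
     op0Q_mult L (taubar_upto \<gamma> \<mu> L lam n) (R0j \<gamma> L (Suc n) (lam + \<mu> (Suc n)))"

definition Kop :: "complex \<Rightarrow> complex \<Rightarrow> op0Q" where
  "Kop h lam = (\<lambda>(a, s) (b, t).
     if a = b \<and> s = t then (if a then sinh (h - lam) else sinh (h + lam)) else 0)"

definition Tmon :: "complex \<Rightarrow> complex \<Rightarrow> (nat \<Rightarrow> complex) \<Rightarrow> nat \<Rightarrow> complex \<Rightarrow> op0Q" where
  "Tmon \<gamma> h \<mu> L lam =
     op0Q_mult L (op0Q_mult L (tau_upto \<gamma> \<mu> L lam L) (Kop h lam)) (taubar_upto \<gamma> \<mu> L lam L)"

definition Bop :: "complex \<Rightarrow> complex \<Rightarrow> (nat \<Rightarrow> complex) \<Rightarrow> nat \<Rightarrow> complex \<Rightarrow> opQ" where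
  "Bop \<gamma> h \<mu> L lam = (\<lambda>s t. Tmon \<gamma> h \<mu> L lam (False, s) (True, t))"

primrec Bprod :: "complex \<Rightarrow> complex \<Rightarrow> (nat \<Rightarrow> complex) \<Rightarrow> nat \<Rightarrow> (nat \<Rightarrow> complex) \<Rightarrow> nat \<Rightarrow> opQ" where
  "Bprod \<gamma> h \<mu> L lam 0 = op_id"
| "Bprod \<gamma> h \<mu> L lam (Suc n) = opQ_mult L (Bprod \<gamma> h \<mu> L lam n) (Bop \<gamma> h \<mu> L (lam (Suc n)))"

definition Zpf :: "complex \<Rightarrow> complex \<Rightarrow> (nat \<Rightarrow> complex) \<Rightarrow> nat \<Rightarrow> (nat \<Rightarrow> complex) \<Rightarrow> complex" where
  "Zpf \<gamma> h \<mu> L lam = Bprod \<gamma> h \<mu> L lam L (replicate L True) (replicate L False)"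

end

theory Submission
  imports Defs
begin

type_synonym loc = "bool \<times> bool \<times> bool \<Rightarrow> bool \<times> bool \<times> bool \<Rightarrow> complex"

definition lmult :: "loc \<Rightarrow> loc \<Rightarrow> loc" where
  "lmult F G = (\<lambda>x y. \<Sum>z\<in>UNIV. F x z * G z y)"

lemma UNIV_bool3: "(UNIV :: (bool \<times> bool \<times> bool) set) =
  {(False,False,False),(False,False,True),(False,True,False),(False,True,True),
   (True,False,False),(True,False,True),(True,True,False),(True,True,True)}"
  by auto

lemma sum_bool3: "(\<Sum>z\<in>(UNIV :: (bool \<times> bool \<times> bool) set). f z) =
  f (False,False,False) + f (False,False,True) + f (False,True,False) + f (False,True,True) +
  f (True,False,False) + f (True,False,True) + f (True,True,False) + f (True,True,True)"
  unfolding UNIV_bool3 by (simp add: algebra_simps)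

definition RaF :: "complex \<Rightarrow> complex \<Rightarrow> loc" where
  "RaF \<gamma> u = (\<lambda>(a,b,x) (a',b',x'). Rmat \<gamma> u (a,x) (a',x') * (if b = b' then 1 else 0))"
definition RbF :: "complex \<Rightarrow> complex \<Rightarrow> loc" where
  "RbF \<gamma> u = (\<lambda>(a,b,x) (a',b',x'). Rmat \<gamma> u (b,x) (b',x') * (if a = a' then 1 else 0))"
definition triv :: "(bool \<times> bool \<Rightarrow> bool \<times> bool \<Rightarrow> complex) \<Rightarrow> loc" where
  "triv G = (\<lambda>(a,b,x) (a',b',x'). G (a,b) (a',b') * (if x = x' then 1 else 0))"

lemma RaF_app: "RaF \<gamma> u (a,b,x) (a',b',x') = Rmat \<gamma> u (a,x) (a',x') * (if b = b' then 1 else 0)"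
  by (simp add: RaF_def)
lemma RbF_app: "RbF \<gamma> u (a,b,x) (a',b',x') = Rmat \<gamma> u (b,x) (b',x') * (if a = a' then 1 else 0)"
  by (simp add: RbF_def)
lemma triv_app: "triv G (a,b,x) (a',b',x') = G (a,b) (a',b') * (if x = x' then 1 else 0)"
  by (simp add: triv_def)

lemma lmult_RaF: "lmult (RaF \<gamma> u) G (a,b,x) y =
   (if a = x then sinh (u+\<gamma>) * G (a,b,x) y else sinh u * G (a,b,x) y + sinh \<gamma> * G (x,b,a) y)"
  by (cases a; cases b; cases x) (simp_all add: lmult_def sum_bool3 RaF_def Rmat_def)

lemma lmult_RbF: "lmult (RbF \<gamma> u) G (a,b,x) y =
   (if b = x then sinh (u+\<gamma>) * G (a,b,x) y else sinh u * G (a,b,x) y + sinh \<gamma> * G (a,x,b) y)"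
  by (cases a; cases b; cases x) (simp_all add: lmult_def sum_bool3 RbF_def Rmat_def)

lemma lmult_Rab: "lmult (triv (Rmat \<gamma> u)) G (a,b,x) y =
   (if a = b then sinh (u+\<gamma>) * G (a,b,x) y else sinh u * G (a,b,x) y + sinh \<gamma> * G (b,a,x) y)"
  by (cases a; cases b; cases x) (simp_all add: lmult_def sum_bool3 triv_def Rmat_def)


lemma ybe1: "lmult (RaF \<gamma> x) (lmult (triv (Rmat \<gamma> (x+y))) (RbF \<gamma> y)) =
             lmult (RbF \<gamma> y) (lmult (triv (Rmat \<gamma> (x+y))) (RaF \<gamma> x))"
proof (intro ext)
  fix p q :: "bool \<times> bool \<times> bool"
  obtain a b c where p: "p = (a,b,c)" by (cases p) auto
  obtain a' b' c' where q: "q = (a',b',c')" by (cases q) auto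
  show "lmult (RaF \<gamma> x) (lmult (triv (Rmat \<gamma> (x+y))) (RbF \<gamma> y)) p q =
             lmult (RbF \<gamma> y) (lmult (triv (Rmat \<gamma> (x+y))) (RaF \<gamma> x)) p q"
    unfolding p q
    apply (cases a; cases b; cases c; cases a'; cases b'; cases c')
     apply (simp_all add: lmult_RaF lmult_RbF lmult_Rab RaF_app RbF_app triv_app Rmat_def)
     apply ((simp_all only: sinh_field_def exp_minus exp_add))?
     apply (simp_all add: field_simps)?
    done
qed

section \<open>Operators on V_a (x) V_b (x) V_Q\<close>

type_synonym op3 = "bool \<times> bool \<times> bool list \<Rightarrow> bool \<times> bool \<times> bool list \<Rightarrow> complex"

definition D :: "nat \<Rightarrow> (bool \<times> bool \<times> bool list) set" where
  "D L = UNIV \<times> UNIV \<times> states L"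

definition msk :: "nat \<Rightarrow> op3 \<Rightarrow> op3" where
  "msk L M = (\<lambda>p q. if p \<in> D L \<and> q \<in> D L then M p q else 0)"

definition m3 :: "nat \<Rightarrow> op3 \<Rightarrow> op3 \<Rightarrow> op3" where
  "m3 L M N = (\<lambda>p q. if p \<in> D L \<and> q \<in> D L then \<Sum>r\<in>D L. M p r * N r q else 0)"

lemma finite_states: "finite (states L)"
proof -
  have "states L \<subseteq> {xs. set xs \<subseteq> UNIV \<and> length xs = L}" by (auto simp: states_def)
  moreover have "finite {xs. set xs \<subseteq> (UNIV::bool set) \<and> length xs = L}"
    by (rule finite_lists_length_eq) simp
  ultimately show ?thesis by (rule finite_subset)
qed

lemma finite_D: "finite (D L)"
  by (simp add: D_def finite_states)

lemma m3_assoc: "m3 L (m3 L A B) C = m3 L A (m3 L B C)"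
proof (intro ext)
  fix p q
  show "m3 L (m3 L A B) C p q = m3 L A (m3 L B C) p q"
  proof (cases "p \<in> D L \<and> q \<in> D L")
    case True
    have "m3 L (m3 L A B) C p q = (\<Sum>r\<in>D L. (\<Sum>r'\<in>D L. A p r' * B r' r) * C r q)"
      using True by (simp add: m3_def)
    also have "\<dots> = (\<Sum>r\<in>D L. \<Sum>r'\<in>D L. A p r' * B r' r * C r q)"
      by (simp add: sum_distrib_right)
    also have "\<dots> = (\<Sum>r'\<in>D L. \<Sum>r\<in>D L. A p r' * B r' r * C r q)"
      by (rule sum.swap)
    also have "\<dots> = (\<Sum>r'\<in>D L. A p r' * (\<Sum>r\<in>D L. B r' r * C r q))"
      by (simp add: sum_distrib_left mult.assoc)
    also have "\<dots> = m3 L A (m3 L B C) p q"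
      using True by (simp add: m3_def cong: sum.cong)
    finally show ?thesis .
  next
    case False
    then show ?thesis by (auto simp: m3_def)
  qed
qed

lemma msk_m3[simp]: "msk L (m3 L A B) = m3 L A B"
  by (auto simp: msk_def m3_def fun_eq_iff)

lemma m3_msk_left[simp]: "m3 L (msk L A) B = m3 L A B"
  by (auto simp: msk_def m3_def fun_eq_iff intro!: sum.cong)

lemma m3_msk_right[simp]: "m3 L A (msk L B) = m3 L A B"
  by (auto simp: msk_def m3_def fun_eq_iff intro!: sum.cong)

lemma msk_msk[simp]: "msk L (msk L A) = msk L A"
  by (auto simp: msk_def fun_eq_iff)

definition agree :: "nat \<Rightarrow> nat \<Rightarrow> bool list \<Rightarrow> bool list \<Rightarrow> bool" where
  "agree L m s t = (\<forall>k<L. k \<noteq> m \<longrightarrow> s ! k = t ! k)"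

definition Loc :: "nat \<Rightarrow> nat \<Rightarrow> loc \<Rightarrow> op3" where
  "Loc L m F = msk L (\<lambda>(a,b,s) (a',b',t). F (a,b,s!m) (a',b',t!m) * (if agree L m s t then 1 else 0))"

lemma msk_Loc[simp]: "msk L (Loc L m F) = Loc L m F"
  by (simp add: Loc_def)

lemma Loc_app: "Loc L m F (a,b,s) (a',b',t) =
   (if s \<in> states L \<and> t \<in> states L then F (a,b,s!m) (a',b',t!m) * (if agree L m s t then 1 else 0) else 0)"
  by (simp add: Loc_def msk_def D_def)

lemma collapse:
  assumes s: "s \<in> states L" and m: "m < L"
  shows "(\<Sum>u\<in>states L. (if agree L m s u then f u else 0)) = (\<Sum>x\<in>UNIV. f (s[m:=x]))"
proof -
  have "(\<Sum>u\<in>states L. (if agree L m s u then f u else 0)) = (\<Sum>u\<in>{u\<in>states L. agree L m s u}. f u)"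
    by (simp add: sum.inter_filter[symmetric] finite_states)
  also have "{u\<in>states L. agree L m s u} = (\<lambda>x. s[m:=x]) ` UNIV"
  proof (intro set_eqI iffI)
    fix u assume u: "u \<in> {u\<in>states L. agree L m s u}"
    then have "u = s[m := u!m]" using s m
      by (intro nth_equalityI) (auto simp: states_def agree_def nth_list_update)
    then show "u \<in> (\<lambda>x. s[m:=x]) ` UNIV" by blast
  next
    fix u assume "u \<in> (\<lambda>x. s[m:=x]) ` UNIV"
    then show "u \<in> {u\<in>states L. agree L m s u}" using s
      by (auto simp: states_def agree_def nth_list_update)
  qed
  also have "(\<Sum>u\<in>(\<lambda>x. s[m:=x]) ` UNIV. f u) = (\<Sum>x\<in>UNIV. f (s[m:=x]))"
  proof (rule sum.reindex[unfolded comp_def])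
    show "inj_on (\<lambda>x. s[m:=x]) UNIV"
      using s m by (intro inj_onI) (metis nth_list_update_eq states_def mem_Collect_eq)
  qed
  finally show ?thesis .
qed

lemma mem_D[simp]: "((a,b,s) \<in> D L) = (s \<in> states L)"
  by (simp add: D_def)

lemma sum_D: "(\<Sum>r\<in>D L. f r) = (\<Sum>a\<in>UNIV. \<Sum>b\<in>UNIV. \<Sum>u\<in>states L. f (a,b,u))"
  by (simp add: D_def sum.cartesian_product)

lemma sum_bool: "(\<Sum>x\<in>(UNIV::bool set). f x) = f False + f True"
  by (simp add: UNIV_bool add.commute)

lemma agree_upd: "m < L \<Longrightarrow> agree L m (s[m:=x]) t = agree L m s t"
  by (auto simp: agree_def nth_list_update)

lemma upd_states: "s \<in> states L \<Longrightarrow> s[m:=x] \<in> states L"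
  by (simp add: states_def)

lemma Loc_mult:
  assumes m: "m < L"
  shows "m3 L (Loc L m F) (Loc L m G) = Loc L m (lmult F G)"
proof (intro ext)
  fix p q :: "bool \<times> bool \<times> bool list"
  obtain a b s where p: "p = (a,b,s)" by (cases p) auto
  obtain a' b' t where q: "q = (a',b',t)" by (cases q) auto
  show "m3 L (Loc L m F) (Loc L m G) p q = Loc L m (lmult F G) p q"
  proof (cases "s \<in> states L \<and> t \<in> states L")
    case False then show ?thesis by (auto simp: p q m3_def Loc_app D_def)
  next
    case True
    then have s: "s \<in> states L" and t: "t \<in> states L" by auto
    have "m3 L (Loc L m F) (Loc L m G) p q =
      (\<Sum>a''\<in>UNIV. \<Sum>b''\<in>UNIV. \<Sum>u\<in>states L.
         (if agree L m s u then F (a,b,s!m) (a'',b'',u!m) * (G (a'',b'',u!m) (a',b',t!m) *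
              (if agree L m u t then 1 else 0)) else 0))"
      using s t unfolding p q m3_def sum_D
      by (simp add: D_def, intro sum.cong refl) (auto simp: Loc_app)
    also have "\<dots> = (\<Sum>a''\<in>UNIV. \<Sum>b''\<in>UNIV. \<Sum>x\<in>UNIV.
         F (a,b,s!m) (a'',b'',x) * (G (a'',b'',x) (a',b',t!m) * (if agree L m s t then 1 else 0)))"
    proof -
      have lm: "m < length s" using s m by (simp add: states_def)
      show ?thesis by (simp add: collapse[OF s m] agree_upd[OF m] lm)
    qed
    also have "\<dots> = Loc L m (lmult F G) p q"
      using s t by (simp add: p q Loc_app lmult_def sum_bool3 sum_bool algebra_simps)
    finally show ?thesis .
  qed
qed

lemma agree_upd2:
  assumes "s \<in> states L" "j < L" "j \<noteq> k"
  shows "agree L k (s[j:=x]) t = (x = t!j \<and> (\<forall>i<L. i \<noteq> j \<and> i \<noteq> k \<longrightarrow> s!i = t!i))"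
  using assms unfolding agree_def states_def
  by (auto simp: nth_list_update)

lemma Loc_mult2:
  assumes j: "j < L" and k: "k < L" and jk: "j \<noteq> k"
  shows "m3 L (Loc L j F) (Loc L k G) (a,b,s) (a',b',t) =
    (if s \<in> states L \<and> t \<in> states L \<and> (\<forall>i<L. i \<noteq> j \<and> i \<noteq> k \<longrightarrow> s!i = t!i)
     then \<Sum>a''\<in>UNIV. \<Sum>b''\<in>UNIV. F (a,b,s!j) (a'',b'',t!j) * G (a'',b'',s!k) (a',b',t!k) else 0)"
proof (cases "s \<in> states L \<and> t \<in> states L")
  case False then show ?thesis by (auto simp: m3_def Loc_app D_def)
next
  case True
  then have s: "s \<in> states L" and t: "t \<in> states L" by auto
  have lj: "j < length s" using s j by (simp add: states_def)
  have "m3 L (Loc L j F) (Loc L k G) (a,b,s) (a',b',t) =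
      (\<Sum>a''\<in>UNIV. \<Sum>b''\<in>UNIV. \<Sum>u\<in>states L.
         (if agree L j s u then F (a,b,s!j) (a'',b'',u!j) * (G (a'',b'',u!k) (a',b',t!k) *
              (if agree L k u t then 1 else 0)) else 0))"
    using s t unfolding m3_def sum_D
    by (simp add: D_def, intro sum.cong refl) (auto simp: Loc_app)
  also have "\<dots> = (\<Sum>a''\<in>UNIV. \<Sum>b''\<in>UNIV. \<Sum>x\<in>UNIV.
         F (a,b,s!j) (a'',b'',x) * (G (a'',b'',s!k) (a',b',t!k) *
            (if x = t!j \<and> (\<forall>i<L. i \<noteq> j \<and> i \<noteq> k \<longrightarrow> s!i = t!i) then 1 else 0)))"
    using jk by (simp add: collapse[OF s j] agree_upd2[OF s j jk] lj)
  also have "\<dots> = (if (\<forall>i<L. i \<noteq> j \<and> i \<noteq> k \<longrightarrow> s!i = t!i)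
     then \<Sum>a''\<in>UNIV. \<Sum>b''\<in>UNIV. F (a,b,s!j) (a'',b'',t!j) * G (a'',b'',s!k) (a',b',t!k) else 0)"
    by (cases "t!j") (auto simp: sum_bool)
  finally show ?thesis using s t by simp
qed

lemma comm_ab:
  assumes j: "j < L" and k: "k < L" and jk: "j \<noteq> k"
  shows "m3 L (Loc L j (RaF \<gamma> x)) (Loc L k (RbF \<gamma> y)) = m3 L (Loc L k (RbF \<gamma> y)) (Loc L j (RaF \<gamma> x))"
proof (intro ext)
  fix p q :: "bool \<times> bool \<times> bool list"
  obtain a b s where p: "p = (a,b,s)" by (cases p) auto
  obtain a' b' t where q: "q = (a',b',t)" by (cases q) auto
  have e: "(\<forall>i<L. i \<noteq> k \<and> i \<noteq> j \<longrightarrow> s!i = t!i) = (\<forall>i<L. i \<noteq> j \<and> i \<noteq> k \<longrightarrow> s!i = t!i)" by auto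
  show "m3 L (Loc L j (RaF \<gamma> x)) (Loc L k (RbF \<gamma> y)) p q = m3 L (Loc L k (RbF \<gamma> y)) (Loc L j (RaF \<gamma> x)) p q"
    unfolding p q Loc_mult2[OF j k jk] Loc_mult2[OF k j jk[symmetric]] e
    by (cases "s \<in> states L \<and> t \<in> states L \<and> (\<forall>i<L. i \<noteq> j \<and> i \<noteq> k \<longrightarrow> s!i = t!i)")
       (simp_all only: if_True if_False, simp_all add: sum_bool RaF_app RbF_app)
qed

lemma ind_agree:
  assumes "s \<in> states L" "t \<in> states L" "m < L"
  shows "(if s!m = t!m then 1 else 0) * (if agree L m s t then 1 else (0::complex)) = (if s = t then 1 else 0)"
proof -
  have "((s!m = t!m) \<and> agree L m s t) = (s = t)"
    using assms by (auto simp: agree_def states_def intro: nth_equalityI)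
  then show ?thesis by auto
qed

lemma Loc_triv_eq:
  assumes "m < L"
  shows "Loc L m (triv G) = msk L (\<lambda>(a,b,s) (a',b',t). G (a,b) (a',b') * (if s = t then 1 else 0))"
  using assms by (auto simp: fun_eq_iff Loc_app triv_app msk_def D_def mult.assoc ind_agree)

lemma Loc_triv_site:
  assumes "m < L" "m' < L"
  shows "Loc L m (triv G) = Loc L m' (triv G)"
  using assms by (simp add: Loc_triv_eq)

definition Ea :: "nat \<Rightarrow> op0Q \<Rightarrow> op3" where
  "Ea L M = msk L (\<lambda>(a,b,s) (a',b',t). M (a,s) (a',t) * (if b = b' then 1 else 0))"
definition Eb :: "nat \<Rightarrow> op0Q \<Rightarrow> op3" where
  "Eb L M = msk L (\<lambda>(a,b,s) (a',b',t). M (b,s) (b',t) * (if a = a' then 1 else 0))"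

lemma Ea_app: "Ea L M (a,b,s) (a',b',t) =
   (if s \<in> states L \<and> t \<in> states L then M (a,s) (a',t) * (if b = b' then 1 else 0) else 0)"
  by (simp add: Ea_def msk_def D_def)
lemma Eb_app: "Eb L M (a,b,s) (a',b',t) =
   (if s \<in> states L \<and> t \<in> states L then M (b,s) (b',t) * (if a = a' then 1 else 0) else 0)"
  by (simp add: Eb_def msk_def D_def)
lemma msk_Ea[simp]: "msk L (Ea L M) = Ea L M" by (simp add: Ea_def)
lemma msk_Eb[simp]: "msk L (Eb L M) = Eb L M" by (simp add: Eb_def)

lemma sum_op0: "(\<Sum>r\<in>(UNIV::bool set) \<times> states L. f r) = (\<Sum>a\<in>UNIV. \<Sum>u\<in>states L. f (a,u))"
  by (simp add: sum.cartesian_product)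

lemma Ea_mult: "Ea L (op0Q_mult L M N) = m3 L (Ea L M) (Ea L N)"
proof (intro ext)
  fix p q :: "bool \<times> bool \<times> bool list"
  obtain a b s where p: "p = (a,b,s)" by (cases p) auto
  obtain a' b' t where q: "q = (a',b',t)" by (cases q) auto
  show "Ea L (op0Q_mult L M N) p q = m3 L (Ea L M) (Ea L N) p q"
    unfolding p q m3_def sum_D op0Q_mult_def sum_op0
    by (auto simp: Ea_app sum_bool algebra_simps sum.distrib intro!: sum.cong)
qed

lemma Eb_mult: "Eb L (op0Q_mult L M N) = m3 L (Eb L M) (Eb L N)"
proof (intro ext)
  fix p q :: "bool \<times> bool \<times> bool list"
  obtain a b s where p: "p = (a,b,s)" by (cases p) auto
  obtain a' b' t where q: "q = (a',b',t)" by (cases q) auto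
  show "Eb L (op0Q_mult L M N) p q = m3 L (Eb L M) (Eb L N) p q"
    unfolding p q m3_def sum_D op0Q_mult_def sum_op0
    by (auto simp: Eb_app sum_bool algebra_simps sum.distrib intro!: sum.cong)
qed

lemma Ea_R0j: "Ea L (R0j \<gamma> L j x) = Loc L (j - 1) (RaF \<gamma> x)"
  by (auto simp: fun_eq_iff Ea_app Loc_app R0j_def RaF_app agree_def)
lemma Eb_R0j: "Eb L (R0j \<gamma> L j x) = Loc L (j - 1) (RbF \<gamma> x)"
  by (auto simp: fun_eq_iff Eb_app Loc_app R0j_def RbF_app agree_def)

definition KaG :: "complex \<Rightarrow> complex \<Rightarrow> bool \<times> bool \<Rightarrow> bool \<times> bool \<Rightarrow> complex" where
  "KaG h l = (\<lambda>p q. if p = q then (if fst p then sinh (h - l) else sinh (h + l)) else 0)"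
definition KbG :: "complex \<Rightarrow> complex \<Rightarrow> bool \<times> bool \<Rightarrow> bool \<times> bool \<Rightarrow> complex" where
  "KbG h l = (\<lambda>p q. if p = q then (if snd p then sinh (h - l) else sinh (h + l)) else 0)"

lemma Ea_Kop: assumes "m < L" shows "Ea L (Kop h l) = Loc L m (triv (KaG h l))"
  using assms by (auto simp: Loc_triv_eq fun_eq_iff Ea_app msk_def D_def Kop_def KaG_def)
lemma Eb_Kop: assumes "m < L" shows "Eb L (Kop h l) = Loc L m (triv (KbG h l))"
  using assms by (auto simp: Loc_triv_eq fun_eq_iff Eb_app msk_def D_def Kop_def KbG_def)

lemma if01_mult: "(if P then 1 else 0) * (x::complex) = (if P then x else 0)" by simp
lemma mult_if01: "(x::complex) * (if P then 1 else 0) = (if P then x else 0)" by simp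

lemma m3_id_left[simp]: "m3 L op_id X = msk L X"
  by (auto simp: fun_eq_iff m3_def msk_def op_id_def if01_mult sum.delta finite_D)
lemma m3_id_right[simp]: "m3 L X op_id = msk L X"
  by (auto simp: fun_eq_iff m3_def msk_def op_id_def mult_if01 sum.delta' finite_D)
lemma Ea_id: "Ea L op_id = msk L op_id"
  by (auto simp: fun_eq_iff Ea_app msk_def op_id_def D_def)
lemma Eb_id: "Eb L op_id = msk L op_id"
  by (auto simp: fun_eq_iff Eb_app msk_def op_id_def D_def)

lemma m3_Ea_id_left[simp]: "m3 L (Ea L op_id) X = msk L X" by (simp add: Ea_id)
lemma m3_Ea_id_right[simp]: "m3 L X (Ea L op_id) = msk L X" by (simp add: Ea_id)
lemma m3_Eb_id_left[simp]: "m3 L (Eb L op_id) X = msk L X" by (simp add: Eb_id)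
lemma m3_Eb_id_right[simp]: "m3 L X (Eb L op_id) = msk L X" by (simp add: Eb_id)


lemma KaG_app: "KaG h l p q = (if p = q then (if fst p then sinh (h - l) else sinh (h + l)) else 0)"
  by (simp add: KaG_def)
lemma KbG_app: "KbG h l p q = (if p = q then (if snd p then sinh (h - l) else sinh (h + l)) else 0)"
  by (simp add: KbG_def)

lemma lmult_Ka: "lmult (triv (KaG h l)) G (a,b,x) y = (if a then sinh (h-l) else sinh (h+l)) * G (a,b,x) y"
  by (cases a; cases b; cases x) (simp_all add: lmult_def sum_bool3 triv_app KaG_app)
lemma lmult_Kb: "lmult (triv (KbG h l)) G (a,b,x) y = (if b then sinh (h-l) else sinh (h+l)) * G (a,b,x) y"
  by (cases a; cases b; cases x) (simp_all add: lmult_def sum_bool3 triv_app KbG_app)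

lemma exp_twice: "exp (z * 2) = exp z * exp (z::complex)" "exp (2 * z) = exp z * exp (z::complex)"
  by (simp_all only: mult_2 mult_2_right exp_add)


lemma ybe2:
  shows "lmult (triv (Rmat \<gamma> (-\<gamma>))) (lmult (RaF \<gamma> x) (RbF \<gamma> (x+\<gamma>))) = lmult (RbF \<gamma> (x+\<gamma>)) (lmult (RaF \<gamma> x) (triv (Rmat \<gamma> (-\<gamma>))))" (is "?L = ?R")
proof (intro ext)
  fix p q :: "bool \<times> bool \<times> bool"
  obtain a b c where p: "p = (a,b,c)" by (cases p) auto
  obtain a' b' c' where q: "q = (a',b',c')" by (cases q) auto
  show "?L p q = ?R p q"
    unfolding p q
    apply (cases a; cases b; cases c; cases a'; cases b'; cases c')
     apply (simp_all add: lmult_RaF lmult_RbF lmult_Rab lmult_Ka lmult_Kb RaF_app RbF_app triv_app Rmat_def KaG_app KbG_app)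
     apply ((simp_all only: sinh_field_def exp_minus exp_add exp_diff exp_twice))?
     apply (simp_all add: field_simps)?
    done
qed

lemma cka:
  shows "lmult (triv (KaG h l)) (RbF \<gamma> y) = lmult (RbF \<gamma> y) (triv (KaG h l))" (is "?L = ?R")
proof (intro ext)
  fix p q :: "bool \<times> bool \<times> bool"
  obtain a b c where p: "p = (a,b,c)" by (cases p) auto
  obtain a' b' c' where q: "q = (a',b',c')" by (cases q) auto
  show "?L p q = ?R p q"
    unfolding p q
    apply (cases a; cases b; cases c; cases a'; cases b'; cases c')
     apply (simp_all add: lmult_RaF lmult_RbF lmult_Rab lmult_Ka lmult_Kb RaF_app RbF_app triv_app Rmat_def KaG_app KbG_app)
     apply ((simp_all only: sinh_field_def exp_minus exp_add exp_diff exp_twice))?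
     apply (simp_all add: field_simps)?
    done
qed

lemma ckb:
  shows "lmult (triv (KbG h l)) (RaF \<gamma> y) = lmult (RaF \<gamma> y) (triv (KbG h l))" (is "?L = ?R")
proof (intro ext)
  fix p q :: "bool \<times> bool \<times> bool"
  obtain a b c where p: "p = (a,b,c)" by (cases p) auto
  obtain a' b' c' where q: "q = (a',b',c')" by (cases q) auto
  show "?L p q = ?R p q"
    unfolding p q
    apply (cases a; cases b; cases c; cases a'; cases b'; cases c')
     apply (simp_all add: lmult_RaF lmult_RbF lmult_Rab lmult_Ka lmult_Kb RaF_app RbF_app triv_app Rmat_def KaG_app KbG_app)
     apply ((simp_all only: sinh_field_def exp_minus exp_add exp_diff exp_twice))?
     apply (simp_all add: field_simps)?
    done
qed

lemma s1loc:
  shows "lmult (RaF \<gamma> (-\<gamma>)) (RbF \<gamma> 0) = lmult (RbF \<gamma> 0) (triv (Rmat \<gamma> (-\<gamma>)))" (is "?L = ?R")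
proof (intro ext)
  fix p q :: "bool \<times> bool \<times> bool"
  obtain a b c where p: "p = (a,b,c)" by (cases p) auto
  obtain a' b' c' where q: "q = (a',b',c')" by (cases q) auto
  show "?L p q = ?R p q"
    unfolding p q
    apply (cases a; cases b; cases c; cases a'; cases b'; cases c')
     apply (simp_all add: lmult_RaF lmult_RbF lmult_Rab lmult_Ka lmult_Kb RaF_app RbF_app triv_app Rmat_def KaG_app KbG_app)
     apply ((simp_all only: sinh_field_def exp_minus exp_add exp_diff exp_twice))?
     apply (simp_all add: field_simps)?
    done
qed



lemma s2loc:
  assumes l2: "l2 = l1 + \<gamma>"
  shows "lmult (triv (Rmat \<gamma> (-\<gamma>))) (lmult (triv (KaG h l1)) (lmult (triv (Rmat \<gamma> (l1+l2))) (triv (KbG h l2)))) =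
     lmult (triv (KbG h l2)) (lmult (triv (Rmat \<gamma> (l1+l2))) (lmult (triv (KaG h l1)) (triv (Rmat \<gamma> (-\<gamma>)))))"
    (is "?L = ?R")
proof (intro ext)
  fix p q :: "bool \<times> bool \<times> bool"
  obtain a b c where p: "p = (a,b,c)" by (cases p) auto
  obtain a' b' c' where q: "q = (a',b',c')" by (cases q) auto
  have e2: "exp l2 = exp l1 * exp \<gamma>" using l2 by (simp add: exp_add)
  show "?L p q = ?R p q"
    unfolding p q
    apply (cases a; cases b; cases c; cases a'; cases b'; cases c')
     apply (simp_all add: lmult_RaF lmult_RbF lmult_Rab lmult_Ka lmult_Kb RaF_app RbF_app triv_app Rmat_def KaG_app KbG_app)
     apply ((simp_all only: sinh_field_def exp_minus exp_add exp_diff exp_twice e2))?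
     apply (simp_all add: field_simps)?
    done
qed


lemma s3loc:
  assumes l1: "l1 = m - \<gamma>" and l2: "l2 = - m - \<gamma>"
  shows "lmult (RaF \<gamma> (l1 - m)) (lmult (RbF \<gamma> (l2 - m)) (lmult (triv (KaG h l1)) (lmult (triv (Rmat \<gamma> (l1+l2)))
           (lmult (triv (KbG h l2)) (lmult (RaF \<gamma> (l1 + m)) (RbF \<gamma> (l2 + m))))))) = (\<lambda>_ _. 0)"
    (is "?L = ?R")
proof (intro ext)
  fix p q :: "bool \<times> bool \<times> bool"
  obtain a b c where p: "p = (a,b,c)" by (cases p) auto
  obtain a' b' c' where q: "q = (a',b',c')" by (cases q) auto
  have e1: "exp l1 = exp m / exp \<gamma>" using l1 by (simp add: exp_diff)
  have e2: "exp l2 = inverse (exp m * exp \<gamma>)" unfolding l2 by (simp add: exp_diff exp_minus field_simps)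
  show "?L p q = ?R p q"
    unfolding p q
    apply (cases a; cases b; cases c; cases a'; cases b'; cases c')
     apply (simp_all add: lmult_RaF lmult_RbF lmult_Rab lmult_Ka lmult_Kb RaF_app RbF_app triv_app Rmat_def KaG_app KbG_app)
     apply ((simp_all only: sinh_field_def exp_minus exp_add exp_diff exp_twice e1 e2))?
     apply (simp_all add: field_simps)?
    done
qed




definition comm :: "nat \<Rightarrow> op3 \<Rightarrow> op3 \<Rightarrow> bool" where
  "comm L X Y \<longleftrightarrow> m3 L X Y = m3 L Y X"

lemma comm_m3: "comm L X A \<Longrightarrow> comm L X B \<Longrightarrow> comm L X (m3 L A B)"
  unfolding comm_def by (metis m3_assoc)

lemma comm_m3': "comm L A X \<Longrightarrow> comm L B X \<Longrightarrow> comm L (m3 L A B) X"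
  unfolding comm_def by (metis m3_assoc)

lemma comm_Ea_id: "msk L X = X \<Longrightarrow> comm L X (Ea L op_id)"
  unfolding comm_def by simp
lemma comm_Eb_id: "msk L X = X \<Longrightarrow> comm L X (Eb L op_id)"
  unfolding comm_def by simp

abbreviation "ta L \<gamma> \<mu> l n \<equiv> Ea L (tau_upto \<gamma> \<mu> L l n)"
abbreviation "tba L \<gamma> \<mu> l n \<equiv> Ea L (taubar_upto \<gamma> \<mu> L l n)"
abbreviation "tb L \<gamma> \<mu> l n \<equiv> Eb L (tau_upto \<gamma> \<mu> L l n)"
abbreviation "tbb L \<gamma> \<mu> l n \<equiv> Eb L (taubar_upto \<gamma> \<mu> L l n)"

lemma ta_Suc: "ta L \<gamma> \<mu> l (Suc n) = m3 L (Loc L n (RaF \<gamma> (l - \<mu> (Suc n)))) (ta L \<gamma> \<mu> l n)"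
  by (simp add: Ea_mult Ea_R0j)
lemma tba_Suc: "tba L \<gamma> \<mu> l (Suc n) = m3 L (tba L \<gamma> \<mu> l n) (Loc L n (RaF \<gamma> (l + \<mu> (Suc n))))"
  by (simp add: Ea_mult Ea_R0j)
lemma tb_Suc: "tb L \<gamma> \<mu> l (Suc n) = m3 L (Loc L n (RbF \<gamma> (l - \<mu> (Suc n)))) (tb L \<gamma> \<mu> l n)"
  by (simp add: Eb_mult Eb_R0j)
lemma tbb_Suc: "tbb L \<gamma> \<mu> l (Suc n) = m3 L (tbb L \<gamma> \<mu> l n) (Loc L n (RbF \<gamma> (l + \<mu> (Suc n))))"
  by (simp add: Eb_mult Eb_R0j)

lemma comm_Rb_ta: "k < L \<Longrightarrow> n \<le> k \<Longrightarrow> comm L (Loc L k (RbF \<gamma> y)) (ta L \<gamma> \<mu> l n)"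
proof (induction n)
  case 0 then show ?case by (simp add: comm_Ea_id)
next
  case (Suc n)
  have "comm L (Loc L k (RbF \<gamma> y)) (Loc L n (RaF \<gamma> (l - \<mu> (Suc n))))"
    using Suc.prems comm_ab[of n L k \<gamma> _ y] unfolding comm_def by simp
  then show ?case using Suc unfolding ta_Suc by (intro comm_m3) auto
qed

lemma comm_Rb_tba: "k < L \<Longrightarrow> n \<le> k \<Longrightarrow> comm L (Loc L k (RbF \<gamma> y)) (tba L \<gamma> \<mu> l n)"
proof (induction n)
  case 0 then show ?case by (simp add: comm_Ea_id)
next
  case (Suc n)
  have "comm L (Loc L k (RbF \<gamma> y)) (Loc L n (RaF \<gamma> (l + \<mu> (Suc n))))"
    using Suc.prems comm_ab[of n L k \<gamma> _ y] unfolding comm_def by simp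
  then show ?case using Suc unfolding tba_Suc by (intro comm_m3) auto
qed

lemma comm_Ra_tb: "k < L \<Longrightarrow> n \<le> k \<Longrightarrow> comm L (Loc L k (RaF \<gamma> y)) (tb L \<gamma> \<mu> l n)"
proof (induction n)
  case 0 then show ?case by (simp add: comm_Eb_id)
next
  case (Suc n)
  have "comm L (Loc L k (RaF \<gamma> y)) (Loc L n (RbF \<gamma> (l - \<mu> (Suc n))))"
    using Suc.prems comm_ab[of k L n \<gamma> y] unfolding comm_def by simp
  then show ?case using Suc unfolding tb_Suc by (intro comm_m3) auto
qed

lemma comm_Ra_tbb: "k < L \<Longrightarrow> n \<le> k \<Longrightarrow> comm L (Loc L k (RaF \<gamma> y)) (tbb L \<gamma> \<mu> l n)"
proof (induction n)
  case 0 then show ?case by (simp add: comm_Eb_id)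
next
  case (Suc n)
  have "comm L (Loc L k (RaF \<gamma> y)) (Loc L n (RbF \<gamma> (l + \<mu> (Suc n))))"
    using Suc.prems comm_ab[of k L n \<gamma> y] unfolding comm_def by simp
  then show ?case using Suc unfolding tbb_Suc by (intro comm_m3) auto
qed

abbreviation "Ka L h l \<equiv> Ea L (Kop h l)"
abbreviation "Kb L h l \<equiv> Eb L (Kop h l)"

lemma comm_Ka_Rb: "j < L \<Longrightarrow> comm L (Ka L h l) (Loc L j (RbF \<gamma> y))"
  unfolding comm_def by (simp add: Ea_Kop[of j] Loc_mult cka)
lemma comm_Kb_Ra: "j < L \<Longrightarrow> comm L (Kb L h l) (Loc L j (RaF \<gamma> y))"
  unfolding comm_def by (simp add: Eb_Kop[of j] Loc_mult ckb)

lemma comm_Ka_tb: "n \<le> L \<Longrightarrow> comm L (Ka L h l') (tb L \<gamma> \<mu> l n)"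
proof (induction n)
  case 0 then show ?case by (simp add: comm_Eb_id)
next
  case (Suc n) then show ?case unfolding tb_Suc by (intro comm_m3 comm_Ka_Rb) auto
qed
lemma comm_Ka_tbb: "n \<le> L \<Longrightarrow> comm L (Ka L h l') (tbb L \<gamma> \<mu> l n)"
proof (induction n)
  case 0 then show ?case by (simp add: comm_Eb_id)
next
  case (Suc n) then show ?case unfolding tbb_Suc by (intro comm_m3 comm_Ka_Rb) auto
qed
lemma comm_Kb_ta: "n \<le> L \<Longrightarrow> comm L (Kb L h l') (ta L \<gamma> \<mu> l n)"
proof (induction n)
  case 0 then show ?case by (simp add: comm_Ea_id)
next
  case (Suc n) then show ?case unfolding ta_Suc by (intro comm_m3 comm_Kb_Ra) auto
qed
lemma comm_Kb_tba: "n \<le> L \<Longrightarrow> comm L (Kb L h l') (tba L \<gamma> \<mu> l n)"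
proof (induction n)
  case 0 then show ?case by (simp add: comm_Ea_id)
next
  case (Suc n) then show ?case unfolding tba_Suc by (intro comm_m3 comm_Kb_Ra) auto
qed


definition Rab :: "nat \<Rightarrow> complex \<Rightarrow> complex \<Rightarrow> op3" where
  "Rab L \<gamma> u = Loc L 0 (triv (Rmat \<gamma> u))"

lemma Rab_site: "m < L \<Longrightarrow> Rab L \<gamma> u = Loc L m (triv (Rmat \<gamma> u))"
  unfolding Rab_def by (rule Loc_triv_site) auto

lemma L1:
  assumes "n \<le> L"
  shows "m3 L (m3 L (tba L \<gamma> \<mu> l1 n) (Rab L \<gamma> (l1+l2))) (tb L \<gamma> \<mu> l2 n) =
         m3 L (m3 L (tb L \<gamma> \<mu> l2 n) (Rab L \<gamma> (l1+l2))) (tba L \<gamma> \<mu> l1 n)"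
  using assms
proof (induction n)
  case 0 then show ?case by (simp add: Rab_def)
next
  case (Suc n)
  have nL: "n < L" using Suc.prems by simp
  define Ra where "Ra = Loc L n (RaF \<gamma> (l1 + \<mu> (Suc n)))"
  define Rb where "Rb = Loc L n (RbF \<gamma> (l2 - \<mu> (Suc n)))"
  define R where "R = Rab L \<gamma> (l1+l2)"
  define A where "A = tba L \<gamma> \<mu> l1 n"
  define B where "B = tb L \<gamma> \<mu> l2 n"
  have e: "l1 + \<mu> (Suc n) + (l2 - \<mu> (Suc n)) = l1 + l2" by simp
  have ybe: "m3 L Ra (m3 L R Rb) = m3 L Rb (m3 L R Ra)"
    unfolding Ra_def Rb_def R_def Rab_site[OF nL] Loc_mult[OF nL]
    using ybe1[of \<gamma> "l1 + \<mu> (Suc n)" "l2 - \<mu> (Suc n)"] unfolding e by simp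
  have c1: "m3 L A Rb = m3 L Rb A"
    using comm_Rb_tba[OF nL, of n] unfolding comm_def A_def Rb_def by simp
  have c2: "m3 L Ra B = m3 L B Ra"
    using comm_Ra_tb[OF nL, of n] unfolding comm_def B_def Ra_def by simp
  have IH: "m3 L (m3 L A R) B = m3 L (m3 L B R) A"
    using Suc unfolding A_def B_def R_def by simp
  have "m3 L (m3 L (tba L \<gamma> \<mu> l1 (Suc n)) R) (tb L \<gamma> \<mu> l2 (Suc n)) =
        m3 L (m3 L (m3 L A Ra) R) (m3 L Rb B)"
    unfolding tba_Suc tb_Suc A_def B_def Ra_def Rb_def by simp
  also have "\<dots> = m3 L A (m3 L (m3 L Ra (m3 L R Rb)) B)" by (simp only: m3_assoc)
  also have "\<dots> = m3 L A (m3 L (m3 L Rb (m3 L R Ra)) B)" by (simp only: ybe)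
  also have "\<dots> = m3 L (m3 L A Rb) (m3 L R (m3 L Ra B))" by (simp only: m3_assoc)
  also have "\<dots> = m3 L (m3 L Rb A) (m3 L R (m3 L B Ra))" by (simp only: c1 c2)
  also have "\<dots> = m3 L Rb (m3 L (m3 L (m3 L A R) B) Ra)" by (simp only: m3_assoc)
  also have "\<dots> = m3 L Rb (m3 L (m3 L (m3 L B R) A) Ra)" by (simp only: IH)
  also have "\<dots> = m3 L (m3 L (m3 L Rb B) R) (m3 L A Ra)" by (simp only: m3_assoc)
  also have "\<dots> = m3 L (m3 L (tb L \<gamma> \<mu> l2 (Suc n)) R) (tba L \<gamma> \<mu> l1 (Suc n))"
    unfolding tba_Suc tb_Suc A_def B_def Ra_def Rb_def by simp
  finally show ?case unfolding R_def .
qed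


lemma Ea_Tmon: "Ea L (Tmon \<gamma> h \<mu> L l) = m3 L (m3 L (ta L \<gamma> \<mu> l L) (Ka L h l)) (tba L \<gamma> \<mu> l L)"
  by (simp add: Tmon_def Ea_mult)
lemma Eb_Tmon: "Eb L (Tmon \<gamma> h \<mu> L l) = m3 L (m3 L (tb L \<gamma> \<mu> l L) (Kb L h l)) (tbb L \<gamma> \<mu> l L)"
  by (simp add: Tmon_def Eb_mult)

definition Omega :: "complex \<Rightarrow> complex \<Rightarrow> (nat \<Rightarrow> complex) \<Rightarrow> nat \<Rightarrow> complex \<Rightarrow> complex \<Rightarrow> op3" where
  "Omega \<gamma> h \<mu> L l1 l2 = m3 L (m3 L (Ea L (Tmon \<gamma> h \<mu> L l1)) (Rab L \<gamma> (l1+l2))) (Eb L (Tmon \<gamma> h \<mu> L l2))"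

lemma Omega_decomp:
  "Omega \<gamma> h \<mu> L l1 l2 = m3 L (ta L \<gamma> \<mu> l1 L) (m3 L (tb L \<gamma> \<mu> l2 L) (m3 L (Ka L h l1)
      (m3 L (Rab L \<gamma> (l1+l2)) (m3 L (Kb L h l2) (m3 L (tba L \<gamma> \<mu> l1 L) (tbb L \<gamma> \<mu> l2 L))))))"
proof -
  define A where "A = ta L \<gamma> \<mu> l1 L"
  define B where "B = tb L \<gamma> \<mu> l2 L"
  define A' where "A' = tba L \<gamma> \<mu> l1 L"
  define B' where "B' = tbb L \<gamma> \<mu> l2 L"
  define R where "R = Rab L \<gamma> (l1+l2)"
  define K1 where "K1 = Ka L h l1"
  define K2 where "K2 = Kb L h l2"
  have l1: "m3 L (m3 L A' R) B = m3 L (m3 L B R) A'"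
    unfolding A'_def R_def B_def by (rule L1) simp
  have c1: "m3 L K1 B = m3 L B K1"
    using comm_Ka_tb[of L L h l1 \<gamma> \<mu> l2] unfolding comm_def K1_def B_def by simp
  have c2: "m3 L A' K2 = m3 L K2 A'"
    using comm_Kb_tba[of L L h l2 \<gamma> \<mu> l1] unfolding comm_def K2_def A'_def by simp
  have "Omega \<gamma> h \<mu> L l1 l2 = m3 L (m3 L (m3 L (m3 L A K1) A') R) (m3 L (m3 L B K2) B')"
    unfolding Omega_def Ea_Tmon Eb_Tmon A_def B_def A'_def B'_def R_def K1_def K2_def ..
  also have "\<dots> = m3 L A (m3 L K1 (m3 L (m3 L (m3 L A' R) B) (m3 L K2 B')))" by (simp only: m3_assoc)
  also have "\<dots> = m3 L A (m3 L K1 (m3 L (m3 L (m3 L B R) A') (m3 L K2 B')))" by (simp only: l1)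
  also have "\<dots> = m3 L A (m3 L (m3 L K1 B) (m3 L R (m3 L (m3 L A' K2) B')))" by (simp only: m3_assoc)
  also have "\<dots> = m3 L A (m3 L (m3 L B K1) (m3 L R (m3 L (m3 L K2 A') B')))" by (simp only: c1 c2)
  also have "\<dots> = m3 L A (m3 L B (m3 L K1 (m3 L R (m3 L K2 (m3 L A' B')))))" by (simp only: m3_assoc)
  finally show ?thesis unfolding A_def B_def A'_def B'_def R_def K1_def K2_def .
qed

lemma F1:
  assumes "1 \<le> n" "n \<le> L"
  shows "\<exists>Y. m3 L (ta L \<gamma> \<mu> l1 n) (tb L \<gamma> \<mu> l2 n) =
           m3 L Y (m3 L (Loc L 0 (RaF \<gamma> (l1 - \<mu> 1))) (Loc L 0 (RbF \<gamma> (l2 - \<mu> 1))))"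
  using assms
proof (induction n)
  case 0 then show ?case by simp
next
  case (Suc n)
  show ?case
  proof (cases "n = 0")
    case True
    show ?thesis
      by (rule exI[of _ "Ea L op_id"]) (simp add: True ta_Suc tb_Suc del: tau_upto.simps(2))
  next
    case False
    then obtain Y where Y: "m3 L (ta L \<gamma> \<mu> l1 n) (tb L \<gamma> \<mu> l2 n) =
           m3 L Y (m3 L (Loc L 0 (RaF \<gamma> (l1 - \<mu> 1))) (Loc L 0 (RbF \<gamma> (l2 - \<mu> 1))))"
      using Suc by auto
    have nL: "n < L" using Suc.prems by simp
    define Ra where "Ra = Loc L n (RaF \<gamma> (l1 - \<mu> (Suc n)))"
    define Rb where "Rb = Loc L n (RbF \<gamma> (l2 - \<mu> (Suc n)))"
    have c: "m3 L (ta L \<gamma> \<mu> l1 n) Rb = m3 L Rb (ta L \<gamma> \<mu> l1 n)"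
      using comm_Rb_ta[OF nL, of n] unfolding comm_def Rb_def by simp
    have "m3 L (ta L \<gamma> \<mu> l1 (Suc n)) (tb L \<gamma> \<mu> l2 (Suc n)) =
          m3 L (m3 L Ra (ta L \<gamma> \<mu> l1 n)) (m3 L Rb (tb L \<gamma> \<mu> l2 n))"
      unfolding ta_Suc tb_Suc Ra_def Rb_def ..
    also have "\<dots> = m3 L Ra (m3 L (m3 L (ta L \<gamma> \<mu> l1 n) Rb) (tb L \<gamma> \<mu> l2 n))" by (simp only: m3_assoc)
    also have "\<dots> = m3 L Ra (m3 L (m3 L Rb (ta L \<gamma> \<mu> l1 n)) (tb L \<gamma> \<mu> l2 n))" by (simp only: c)
    also have "\<dots> = m3 L (m3 L (m3 L Ra Rb) Y) (m3 L (Loc L 0 (RaF \<gamma> (l1 - \<mu> 1))) (Loc L 0 (RbF \<gamma> (l2 - \<mu> 1))))"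
      by (simp only: m3_assoc Y)
    finally show ?thesis by blast
  qed
qed

lemma F2:
  assumes "1 \<le> n" "n \<le> L"
  shows "\<exists>Y. m3 L (tba L \<gamma> \<mu> l1 n) (tbb L \<gamma> \<mu> l2 n) =
           m3 L (m3 L (Loc L 0 (RaF \<gamma> (l1 + \<mu> 1))) (Loc L 0 (RbF \<gamma> (l2 + \<mu> 1)))) Y"
  using assms
proof (induction n)
  case 0 then show ?case by simp
next
  case (Suc n)
  show ?case
  proof (cases "n = 0")
    case True
    show ?thesis
      by (rule exI[of _ "Ea L op_id"]) (simp add: True tba_Suc tbb_Suc del: taubar_upto.simps(2))
  next
    case False
    then obtain Y where Y: "m3 L (tba L \<gamma> \<mu> l1 n) (tbb L \<gamma> \<mu> l2 n) =
           m3 L (m3 L (Loc L 0 (RaF \<gamma> (l1 + \<mu> 1))) (Loc L 0 (RbF \<gamma> (l2 + \<mu> 1)))) Y"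
      using Suc by auto
    have nL: "n < L" using Suc.prems by simp
    define Ra where "Ra = Loc L n (RaF \<gamma> (l1 + \<mu> (Suc n)))"
    define Rb where "Rb = Loc L n (RbF \<gamma> (l2 + \<mu> (Suc n)))"
    have c: "m3 L Ra (tbb L \<gamma> \<mu> l2 n) = m3 L (tbb L \<gamma> \<mu> l2 n) Ra"
      using comm_Ra_tbb[OF nL, of n] unfolding comm_def Ra_def by simp
    have "m3 L (tba L \<gamma> \<mu> l1 (Suc n)) (tbb L \<gamma> \<mu> l2 (Suc n)) =
          m3 L (m3 L (tba L \<gamma> \<mu> l1 n) Ra) (m3 L (tbb L \<gamma> \<mu> l2 n) Rb)"
      unfolding tba_Suc tbb_Suc Ra_def Rb_def ..
    also have "\<dots> = m3 L (tba L \<gamma> \<mu> l1 n) (m3 L (m3 L Ra (tbb L \<gamma> \<mu> l2 n)) Rb)" by (simp only: m3_assoc)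
    also have "\<dots> = m3 L (tba L \<gamma> \<mu> l1 n) (m3 L (m3 L (tbb L \<gamma> \<mu> l2 n) Ra) Rb)" by (simp only: c)
    also have "\<dots> = m3 L (m3 L (Loc L 0 (RaF \<gamma> (l1 + \<mu> 1))) (Loc L 0 (RbF \<gamma> (l2 + \<mu> 1)))) (m3 L Y (m3 L Ra Rb))"
      by (simp only: m3_assoc[symmetric] Y)
    finally show ?thesis by blast
  qed
qed

lemma L3:
  assumes "n \<le> L" and l2: "l2 = l1 + \<gamma>"
  shows "m3 L (Rab L \<gamma> (-\<gamma>)) (m3 L (tba L \<gamma> \<mu> l1 n) (tbb L \<gamma> \<mu> l2 n)) =
         m3 L (tbb L \<gamma> \<mu> l2 n) (m3 L (tba L \<gamma> \<mu> l1 n) (Rab L \<gamma> (-\<gamma>)))"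
  using assms(1)
proof (induction n)
  case 0 then show ?case by (simp add: Rab_def)
next
  case (Suc n)
  have nL: "n < L" using Suc.prems by simp
  define Ra where "Ra = Loc L n (RaF \<gamma> (l1 + \<mu> (Suc n)))"
  define Rb where "Rb = Loc L n (RbF \<gamma> (l2 + \<mu> (Suc n)))"
  define R where "R = Rab L \<gamma> (-\<gamma>)"
  define A where "A = tba L \<gamma> \<mu> l1 n"
  define B where "B = tbb L \<gamma> \<mu> l2 n"
  have e: "l2 + \<mu> (Suc n) = (l1 + \<mu> (Suc n)) + \<gamma>" using l2 by simp
  have ybe: "m3 L R (m3 L Ra Rb) = m3 L Rb (m3 L Ra R)"
    unfolding Ra_def Rb_def R_def Rab_site[OF nL] Loc_mult[OF nL] e
    using ybe2[of \<gamma> "l1 + \<mu> (Suc n)"] by simp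
  have c1: "m3 L Ra B = m3 L B Ra"
    using comm_Ra_tbb[OF nL, of n] unfolding comm_def B_def Ra_def by simp
  have c2: "m3 L A Rb = m3 L Rb A"
    using comm_Rb_tba[OF nL, of n] unfolding comm_def A_def Rb_def by simp
  have IH: "m3 L R (m3 L A B) = m3 L B (m3 L A R)"
    using Suc unfolding A_def B_def R_def by simp
  have "m3 L R (m3 L (tba L \<gamma> \<mu> l1 (Suc n)) (tbb L \<gamma> \<mu> l2 (Suc n))) =
        m3 L R (m3 L (m3 L A Ra) (m3 L B Rb))"
    unfolding tba_Suc tbb_Suc A_def B_def Ra_def Rb_def ..
  also have "\<dots> = m3 L R (m3 L A (m3 L (m3 L Ra B) Rb))" by (simp only: m3_assoc)
  also have "\<dots> = m3 L R (m3 L A (m3 L (m3 L B Ra) Rb))" by (simp only: c1)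
  also have "\<dots> = m3 L (m3 L R (m3 L A B)) (m3 L Ra Rb)" by (simp only: m3_assoc)
  also have "\<dots> = m3 L (m3 L B (m3 L A R)) (m3 L Ra Rb)" by (simp only: IH)
  also have "\<dots> = m3 L B (m3 L A (m3 L R (m3 L Ra Rb)))" by (simp only: m3_assoc)
  also have "\<dots> = m3 L B (m3 L A (m3 L Rb (m3 L Ra R)))" by (simp only: ybe)
  also have "\<dots> = m3 L B (m3 L (m3 L A Rb) (m3 L Ra R))" by (simp only: m3_assoc)
  also have "\<dots> = m3 L B (m3 L (m3 L Rb A) (m3 L Ra R))" by (simp only: c2)
  also have "\<dots> = m3 L (m3 L B Rb) (m3 L (m3 L A Ra) R)" by (simp only: m3_assoc)
  also have "\<dots> = m3 L (tbb L \<gamma> \<mu> l2 (Suc n)) (m3 L (tba L \<gamma> \<mu> l1 (Suc n)) R)"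
    unfolding tba_Suc tbb_Suc A_def B_def Ra_def Rb_def ..
  finally show ?case unfolding R_def .
qed


lemma Rab_col_zero: "Rab L \<gamma> (-\<gamma>) p (True, True, t) = 0"
  by (cases p) (auto simp: Rab_def Loc_app triv_app Rmat_def)

lemma m3_col_zero: "m3 L Z (Rab L \<gamma> (-\<gamma>)) p (True, True, t) = 0"
  by (simp add: m3_def Rab_col_zero)

lemma case1_col:
  assumes L: "1 \<le> L" and la: "la = \<mu> 1 - \<gamma>" and lb: "lb = \<mu> 1"
  shows "Omega \<gamma> h \<mu> L la lb p (True, True, t) = 0"
proof -
  have L0: "0 < L" using L by simp
  obtain Y where Y: "m3 L (ta L \<gamma> \<mu> la L) (tb L \<gamma> \<mu> lb L) =
           m3 L Y (m3 L (Loc L 0 (RaF \<gamma> (la - \<mu> 1))) (Loc L 0 (RbF \<gamma> (lb - \<mu> 1))))"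
    using F1[OF L order_refl] by blast
  define R' where "R' = Rab L \<gamma> (-\<gamma>)"
  define R where "R = Rab L \<gamma> (la+lb)"
  define K1 where "K1 = Ka L h la"
  define K2 where "K2 = Kb L h lb"
  define A' where "A' = tba L \<gamma> \<mu> la L"
  define B' where "B' = tbb L \<gamma> \<mu> lb L"
  define Rb0 where "Rb0 = Loc L 0 (RbF \<gamma> 0)"
  have s1: "m3 L (Loc L 0 (RaF \<gamma> (la - \<mu> 1))) (Loc L 0 (RbF \<gamma> (lb - \<mu> 1))) = m3 L Rb0 R'"
    unfolding Rb0_def R'_def Rab_def Loc_mult[OF L0] using s1loc[of \<gamma>] by (simp add: la lb)
  have lb': "lb = la + \<gamma>" using la lb by simp
  have s2: "m3 L R' (m3 L K1 (m3 L R K2)) = m3 L K2 (m3 L R (m3 L K1 R'))"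
    unfolding R'_def R_def K1_def K2_def Rab_def Ea_Kop[OF L0] Eb_Kop[OF L0] Loc_mult[OF L0]
    using s2loc[OF lb'] by simp
  have s3: "m3 L R' (m3 L A' B') = m3 L B' (m3 L A' R')"
    unfolding R'_def A'_def B'_def by (rule L3[OF order_refl lb'])
  have "Omega \<gamma> h \<mu> L la lb = m3 L (m3 L (ta L \<gamma> \<mu> la L) (tb L \<gamma> \<mu> lb L)) (m3 L K1 (m3 L R (m3 L K2 (m3 L A' B'))))"
    unfolding Omega_decomp R_def K1_def K2_def A'_def B'_def by (simp only: m3_assoc)
  also have "\<dots> = m3 L Y (m3 L Rb0 (m3 L (m3 L R' (m3 L K1 (m3 L R K2))) (m3 L A' B')))"
    by (simp only: Y s1 m3_assoc)
  also have "\<dots> = m3 L Y (m3 L Rb0 (m3 L (m3 L K2 (m3 L R (m3 L K1 R'))) (m3 L A' B')))"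
    by (simp only: s2)
  also have "\<dots> = m3 L Y (m3 L Rb0 (m3 L K2 (m3 L R (m3 L K1 (m3 L R' (m3 L A' B'))))))"
    by (simp only: m3_assoc)
  also have "\<dots> = m3 L Y (m3 L Rb0 (m3 L K2 (m3 L R (m3 L K1 (m3 L B' (m3 L A' R'))))))"
    by (simp only: s3)
  also have "\<dots> = m3 L (m3 L Y (m3 L Rb0 (m3 L K2 (m3 L R (m3 L K1 (m3 L B' A')))))) R'"
    by (simp only: m3_assoc)
  finally show ?thesis unfolding R'_def by (simp add: m3_col_zero)
qed

lemma Loc_zero: "Loc L m (\<lambda>_ _. 0) = (\<lambda>_ _. 0)"
  by (simp add: Loc_def msk_def fun_eq_iff)

lemma m3_zero_left: "m3 L (\<lambda>_ _. 0) X = (\<lambda>_ _. 0)"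
  by (simp add: m3_def fun_eq_iff)
lemma m3_zero_right: "m3 L X (\<lambda>_ _. 0) = (\<lambda>_ _. 0)"
  by (simp add: m3_def fun_eq_iff)

lemma case2_zero:
  assumes L: "1 \<le> L" and la: "la = \<mu> 1 - \<gamma>" and lb: "lb = - \<mu> 1 - \<gamma>"
  shows "Omega \<gamma> h \<mu> L la lb = (\<lambda>_ _. 0)"
proof -
  have L0: "0 < L" using L by simp
  obtain Y where Y: "m3 L (ta L \<gamma> \<mu> la L) (tb L \<gamma> \<mu> lb L) =
           m3 L Y (m3 L (Loc L 0 (RaF \<gamma> (la - \<mu> 1))) (Loc L 0 (RbF \<gamma> (lb - \<mu> 1))))"
    using F1[OF L order_refl] by blast
  obtain Y' where Y': "m3 L (tba L \<gamma> \<mu> la L) (tbb L \<gamma> \<mu> lb L) =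
           m3 L (m3 L (Loc L 0 (RaF \<gamma> (la + \<mu> 1))) (Loc L 0 (RbF \<gamma> (lb + \<mu> 1)))) Y'"
    using F2[OF L order_refl] by blast
  have z: "m3 L (Loc L 0 (RaF \<gamma> (la - \<mu> 1))) (m3 L (Loc L 0 (RbF \<gamma> (lb - \<mu> 1)))
      (m3 L (Ka L h la) (m3 L (Rab L \<gamma> (la+lb)) (m3 L (Kb L h lb)
        (m3 L (Loc L 0 (RaF \<gamma> (la + \<mu> 1))) (Loc L 0 (RbF \<gamma> (lb + \<mu> 1)))))))) = (\<lambda>_ _. 0)"
    unfolding Rab_def Ea_Kop[OF L0] Eb_Kop[OF L0] Loc_mult[OF L0] s3loc[OF la lb] Loc_zero ..
  have "Omega \<gamma> h \<mu> L la lb = m3 L (m3 L (ta L \<gamma> \<mu> la L) (tb L \<gamma> \<mu> lb L))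
      (m3 L (Ka L h la) (m3 L (Rab L \<gamma> (la+lb)) (m3 L (Kb L h lb) (m3 L (tba L \<gamma> \<mu> la L) (tbb L \<gamma> \<mu> lb L)))))"
    unfolding Omega_decomp by (simp only: m3_assoc)
  also have "\<dots> = m3 L Y (m3 L (m3 L (Loc L 0 (RaF \<gamma> (la - \<mu> 1))) (m3 L (Loc L 0 (RbF \<gamma> (lb - \<mu> 1)))
      (m3 L (Ka L h la) (m3 L (Rab L \<gamma> (la+lb)) (m3 L (Kb L h lb)
        (m3 L (Loc L 0 (RaF \<gamma> (la + \<mu> 1))) (Loc L 0 (RbF \<gamma> (lb + \<mu> 1))))))))) Y')"
    by (simp only: Y Y' m3_assoc)
  also have "\<dots> = (\<lambda>_ _. 0)" by (simp only: z m3_zero_left m3_zero_right)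
  finally show ?thesis .
qed


lemma Rab_app: "0 < L \<Longrightarrow> Rab L \<gamma> v (a,b,x) (a',b',y) =
   (if x \<in> states L \<and> y \<in> states L then Rmat \<gamma> v (a,b) (a',b') * (if x = y then 1 else 0) else 0)"
  by (simp add: Rab_def Loc_triv_eq msk_def)

lemma extr_inner:
  assumes L: "0 < L" and s: "s \<in> states L" and u: "u \<in> states L"
  shows "m3 L (Ea L M) (Rab L \<gamma> v) (False,False,s) (a,b,u) =
         (\<Sum>a'\<in>UNIV. M (False,s) (a',u) * Rmat \<gamma> v (a',False) (a,b))"
proof -
  have "m3 L (Ea L M) (Rab L \<gamma> v) (False,False,s) (a,b,u) =
     (\<Sum>a'\<in>UNIV. \<Sum>b'\<in>UNIV. \<Sum>u'\<in>states L. Ea L M (False,False,s) (a',b',u') * Rab L \<gamma> v (a',b',u') (a,b,u))"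
    using s u by (simp add: m3_def sum_D)
  also have "\<dots> = (\<Sum>a'\<in>UNIV. \<Sum>b'\<in>UNIV. \<Sum>u'\<in>states L.
       (if u' = u then M (False,s) (a',u') * (if False = b' then 1 else 0) * Rmat \<gamma> v (a',b') (a,b) else 0))"
    using s u L by (intro sum.cong refl) (auto simp: Ea_app Rab_app)
  also have "\<dots> = (\<Sum>a'\<in>UNIV. M (False,s) (a',u) * Rmat \<gamma> v (a',False) (a,b))"
    using u by (simp add: sum.delta' finite_states sum_bool)
  finally show ?thesis .
qed

lemma extr:
  assumes L: "0 < L" and s: "s \<in> states L" and t: "t \<in> states L"
  shows "Omega \<gamma> h \<mu> L l1 l2 (False,False,s) (True,True,t) =
         sinh (l1+l2) * opQ_mult L (Bop \<gamma> h \<mu> L l1) (Bop \<gamma> h \<mu> L l2) s t"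
proof -
  define T1 where "T1 = Tmon \<gamma> h \<mu> L l1"
  define T2 where "T2 = Tmon \<gamma> h \<mu> L l2"
  have "Omega \<gamma> h \<mu> L l1 l2 (False,False,s) (True,True,t) =
     (\<Sum>a\<in>UNIV. \<Sum>b\<in>UNIV. \<Sum>u\<in>states L. m3 L (Ea L T1) (Rab L \<gamma> (l1+l2)) (False,False,s) (a,b,u) *
          Eb L T2 (a,b,u) (True,True,t))"
    using s t by (simp add: Omega_def m3_def sum_D T1_def T2_def)
  also have "\<dots> = (\<Sum>a\<in>UNIV. \<Sum>b\<in>UNIV. \<Sum>u\<in>states L.
        (\<Sum>a'\<in>UNIV. T1 (False,s) (a',u) * Rmat \<gamma> (l1+l2) (a',False) (a,b)) *
          (T2 (b,u) (True,t) * (if a = True then 1 else 0)))"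
    using s t L by (intro sum.cong refl) (auto simp: extr_inner Eb_app)
  also have "\<dots> = (\<Sum>u\<in>states L. sinh (l1+l2) * (T1 (False,s) (True,u) * T2 (False,u) (True,t)))"
    by (simp add: sum_bool Rmat_def sum.distrib[symmetric] algebra_simps)
  also have "\<dots> = sinh (l1+l2) * opQ_mult L (Bop \<gamma> h \<mu> L l1) (Bop \<gamma> h \<mu> L l2) s t"
    by (simp add: opQ_mult_def Bop_def T1_def T2_def sum_distrib_left)
  finally show ?thesis .
qed


section \<open>Continuity\<close>

lemma cont_Rmat:
  assumes "continuous_on UNIV g" "continuous_on UNIV l"
  shows "continuous_on UNIV (\<lambda>x::real. Rmat (g x) (l x) p q)"
proof -
  have e: "(\<lambda>x. Rmat (g x) (l x) p q) =
    (if p = q then (if fst p = snd p then (\<lambda>x. sinh (l x + g x)) else (\<lambda>x. sinh (l x)))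
     else if fst p \<noteq> snd p \<and> q = (snd p, fst p) then (\<lambda>x. sinh (g x)) else (\<lambda>x. 0))"
    by (auto simp: Rmat_def fun_eq_iff)
  show ?thesis unfolding e using assms by (auto intro!: continuous_intros)
qed

lemma cont_R0j:
  assumes "continuous_on UNIV g" "continuous_on UNIV l"
  shows "continuous_on UNIV (\<lambda>x::real. R0j (g x) L j (l x) P Q)"
proof -
  obtain a s where P: "P = (a,s)" by (cases P)
  obtain b t where Q: "Q = (b,t)" by (cases Q)
  show ?thesis unfolding P Q R0j_def
    using cont_Rmat[OF assms] by (auto intro!: continuous_intros)
qed

lemma cont_tau:
  assumes g: "continuous_on UNIV g" and l: "continuous_on UNIV l" and m: "\<And>k. continuous_on UNIV (\<lambda>x. m x k)"
  shows "continuous_on UNIV (\<lambda>x::real. tau_upto (g x) (m x) L (l x) n P Q)"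
proof (induction n arbitrary: P Q)
  case 0 then show ?case by (simp add: op_id_def)
next
  case (Suc n)
  have "continuous_on UNIV (\<lambda>x. l x - m x (Suc n))" using l m by (intro continuous_intros)
  then show ?case using Suc g
    by (simp add: op0Q_mult_def, intro continuous_intros cont_R0j) (auto simp: l m)
qed

lemma cont_taubar:
  assumes g: "continuous_on UNIV g" and l: "continuous_on UNIV l" and m: "\<And>k. continuous_on UNIV (\<lambda>x. m x k)"
  shows "continuous_on UNIV (\<lambda>x::real. taubar_upto (g x) (m x) L (l x) n P Q)"
proof (induction n arbitrary: P Q)
  case 0 then show ?case by (simp add: op_id_def)
next
  case (Suc n)
  have "continuous_on UNIV (\<lambda>x. l x + m x (Suc n))" using l m by (intro continuous_intros)
  then show ?case using Suc g
    by (simp add: op0Q_mult_def, intro continuous_intros cont_R0j) (auto simp: l m)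
qed

lemma cont_Kop:
  assumes l: "continuous_on UNIV l"
  shows "continuous_on UNIV (\<lambda>x::real. Kop h (l x) P Q)"
proof -
  obtain a s where P: "P = (a,s)" by (cases P)
  obtain b t where Q: "Q = (b,t)" by (cases Q)
  show ?thesis unfolding P Q Kop_def using l
    by (cases "a = b \<and> s = t"; cases a) (auto intro!: continuous_intros)
qed

lemma cont_B1B2:
  assumes g: "continuous_on UNIV g" and l1: "continuous_on UNIV l1" and l2: "continuous_on UNIV l2"
    and m: "\<And>k. continuous_on UNIV (\<lambda>x. m x k)"
  shows "continuous_on UNIV (\<lambda>x::real. opQ_mult L (Bop (g x) h (m x) L (l1 x)) (Bop (g x) h (m x) L (l2 x)) s t)"
  unfolding opQ_mult_def Bop_def Tmon_def op0Q_mult_def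
  by (intro continuous_intros cont_tau cont_taubar cont_Kop g l1 l2 m)

lemma sinh_shift_nonzero:
  fixes w :: complex and x :: real
  assumes "sinh w = 0" "x \<noteq> 0"
  shows "sinh (w + of_real x) \<noteq> 0"
proof
  assume "sinh (w + of_real x) = 0"
  then have e1: "exp (w + of_real x) \<in> {1, -1}" by (simp add: sinh_zero_iff)
  have e0: "exp w \<in> {1, -1}" using assms(1) by (simp add: sinh_zero_iff)
  have a: "cmod (exp w) = 1" using e0 by (auto simp del: norm_exp_eq_Re)
  have b: "cmod (exp (w + of_real x)) = 1" using e1 by (auto simp del: norm_exp_eq_Re)
  have "Re w = 0" using a by (simp add: norm_exp_eq_Re)
  moreover have "Re w + x = 0" using b by (simp add: norm_exp_eq_Re)
  ultimately show False using assms(2) by simp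
qed

lemma limit_zero:
  fixes G :: "real \<Rightarrow> complex"
  assumes c: "continuous_on UNIV G" and z: "\<And>x. x \<noteq> 0 \<Longrightarrow> G x = 0"
  shows "G 0 = 0"
proof -
  have "(G \<longlongrightarrow> G 0) (at 0)"
    using c by (simp add: continuous_on_def)
  moreover have "(G \<longlongrightarrow> 0) (at 0)"
  proof (rule tendsto_eventually)
    show "\<forall>\<^sub>F x in at 0. G x = 0" using z by (auto simp: eventually_at_filter)
  qed
  ultimately show ?thesis by (rule tendsto_unique[rotated]) simp
qed


section \<open>Vanishing of B(l1) B(l2)\<close>

lemma B1B2_nondeg:
  assumes L: "1 \<le> L" and s: "s \<in> states L" and t: "t \<in> states L"
    and la: "la = \<mu> 1 - \<gamma>" and lb: "lb = \<mu> 1 \<or> lb = - \<mu> 1 - \<gamma>"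
    and nz: "sinh (la + lb) \<noteq> 0"
  shows "opQ_mult L (Bop \<gamma> h \<mu> L la) (Bop \<gamma> h \<mu> L lb) s t = 0"
proof -
  have L0: "0 < L" using L by simp
  have "Omega \<gamma> h \<mu> L la lb (False,False,s) (True,True,t) = 0"
    using lb case1_col[where L=L and \<mu>=\<mu> and \<gamma>=\<gamma> and la=la and lb=lb and h=h and p="(False,False,s)" and t=t]
      case2_zero[where L=L and \<mu>=\<mu> and \<gamma>=\<gamma> and la=la and lb=lb and h=h] L la by auto
  then show ?thesis using extr[OF L0 s t, of \<gamma> h \<mu> la lb] nz by simp
qed

lemma B1B2_zero:
  assumes L: "1 \<le> L" and s: "s \<in> states L" and t: "t \<in> states L"
    and la: "la = \<mu> 1 - \<gamma>" and lb: "lb = \<mu> 1 \<or> lb = - \<mu> 1 - \<gamma>"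
  shows "opQ_mult L (Bop \<gamma> h \<mu> L la) (Bop \<gamma> h \<mu> L lb) s t = 0"
proof (cases "sinh (la + lb) = 0")
  case False then show ?thesis
    using B1B2_nondeg[where L=L and \<mu>=\<mu> and \<gamma>=\<gamma> and la=la and lb=lb and h=h and s=s and t=t] L s t la lb by simp
next
  case deg: True
  show ?thesis
  proof (cases "lb = \<mu> 1")
    case True
    define mm where "mm = (\<lambda>x::real. \<mu>(1 := \<mu> 1 + of_real x))"
    define G where "G = (\<lambda>x::real. opQ_mult L (Bop \<gamma> h (mm x) L (\<mu> 1 + of_real x - \<gamma>))
                                         (Bop \<gamma> h (mm x) L (\<mu> 1 + of_real x)) s t)"
    have mc: "continuous_on UNIV (\<lambda>x. mm x k)" for k
      by (cases "k = 1") (auto simp: mm_def intro!: continuous_intros)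
    have c: "continuous_on UNIV G"
      unfolding G_def by (rule cont_B1B2) (auto intro!: continuous_intros mc)
    have z: "G x = 0" if x: "x \<noteq> 0" for x
    proof -
      have e: "\<mu> 1 + of_real x - \<gamma> + (\<mu> 1 + of_real x) = (la + lb) + of_real (2 * x)"
        using la True by simp
      have "sinh (\<mu> 1 + of_real x - \<gamma> + (\<mu> 1 + of_real x)) \<noteq> 0"
        unfolding e by (rule sinh_shift_nonzero) (use deg x in auto)
      then show ?thesis unfolding G_def
        by (intro B1B2_nondeg[where L=L and \<mu>="mm x" and \<gamma>=\<gamma> and h=h and s=s and t=t] L s t) (auto simp: mm_def)
    qed
    have "G 0 = 0" by (rule limit_zero[OF c z])
    moreover have "mm 0 = \<mu>" by (simp add: mm_def)
    ultimately show ?thesis using la True by (simp add: G_def)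
  next
    case False
    then have lb': "lb = - \<mu> 1 - \<gamma>" using lb by simp
    define G where "G = (\<lambda>x::real. opQ_mult L (Bop (\<gamma> + of_real x) h \<mu> L (\<mu> 1 - (\<gamma> + of_real x)))
                                         (Bop (\<gamma> + of_real x) h \<mu> L (- \<mu> 1 - (\<gamma> + of_real x))) s t)"
    have c: "continuous_on UNIV G"
      unfolding G_def by (rule cont_B1B2) (auto intro!: continuous_intros)
    have z: "G x = 0" if x: "x \<noteq> 0" for x
    proof -
      have e: "\<mu> 1 - (\<gamma> + of_real x) + (- \<mu> 1 - (\<gamma> + of_real x)) = (la + lb) + of_real (- 2 * x)"
        using la lb' by simp
      have "sinh (\<mu> 1 - (\<gamma> + of_real x) + (- \<mu> 1 - (\<gamma> + of_real x))) \<noteq> 0"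
        unfolding e by (rule sinh_shift_nonzero) (use deg x in auto)
      then show ?thesis unfolding G_def
        by (intro B1B2_nondeg[where L=L and \<mu>=\<mu> and \<gamma>="\<gamma> + of_real x" and h=h and s=s and t=t] L s t) auto
    qed
    have "G 0 = 0" by (rule limit_zero[OF c z])
    then show ?thesis using la lb' by (simp add: G_def)
  qed
qed

lemma Bprod_zero:
  assumes L: "1 \<le> L" and s: "s \<in> states L"
    and l1: "lam 1 = \<mu> 1 - \<gamma>" and l2: "lam 2 = \<mu> 1 \<or> lam 2 = - \<mu> 1 - \<gamma>"
    and n: "2 \<le> n" and t: "t \<in> states L"
  shows "Bprod \<gamma> h \<mu> L lam n s t = 0"
  using n t
proof (induction n arbitrary: t rule: dec_induct)
  case base
  have "Bprod \<gamma> h \<mu> L lam 2 s t = opQ_mult L (Bop \<gamma> h \<mu> L (lam 1)) (Bop \<gamma> h \<mu> L (lam 2)) s t"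
    using s by (simp add: numeral_2_eq_2 opQ_mult_def op_id_def if01_mult sum.delta finite_states)
  also have "\<dots> = 0"
    by (rule B1B2_zero[where L=L and \<mu>=\<mu> and \<gamma>=\<gamma> and h=h and s=s and t=t]) (use L s base l1 l2 in auto)
  finally show ?case .
next
  case (step n)
  then show ?case by (simp add: opQ_mult_def)
qed

theorem lemma3:
  fixes \<gamma> h :: complex and \<mu> lam :: "nat \<Rightarrow> complex" and L :: nat
  assumes "L \<ge> 2"
    and "lam 1 = \<mu> 1 - \<gamma>"
    and "lam 2 = \<mu> 1 \<or> lam 2 = - \<mu> 1 - \<gamma>"
  shows "Zpf \<gamma> h \<mu> L lam = 0"
proof -
  have s: "replicate L True \<in> states L" and t: "replicate L False \<in> states L"
    by (simp_all add: states_def)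
  show ?thesis unfolding Zpf_def
    by (rule Bprod_zero[where L=L and \<mu>=\<mu> and \<gamma>=\<gamma> and h=h and lam=lam]) (use assms s t in auto)
qed

end
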